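(* Let $w$ be an nTL-monomial for $P_n$ with decreasing runs $R_1,\dots,R_k$ (in order of appearance), where $R_i$ has peak $p_i$ and length $r_i$, and let $v_i=p_i-r_i+1$ be the valley of $R_i$. Then $v_1<v_2<\cdots<v_k$.
   Context: Fix $n\ge 0$. The nil-Temperley-Lieb algebra $A_n$ of the path graph $P_n$ is the unital associative algebra generated by $x_1,\dots,x_n$ subject to the relations $x_i^2=0$; $x_ix_j=x_jx_i$ if $|i-j|>1$; $x_ix_{i+1}x_i=0$ and $x_{i+1}x_ix_{i+1}=0$ for $1\le i<n$. A word is a finite product $x_{i_1}\cdots x_{i_m}$ of generators. Two words are equivalent if one can be obtained from the other by repeatedly swapping adjacent letters $x_ix_j\to x_jx_i$ with $|i-j|>1$. A word is reducible if it equals $0$ in $A_n$. Words of the same length are compared lexicographically by index sequences. An nTL-monomial is a word that is not reducible and lexicographically smallest among all words equivalent to it. A decreasing run is a maximal block of consecutive letters with strictly decreasing indices; the index of its first letter is its peak, the index of its last letter is its valley. (In an nTL-monomial indices in a run decrease by exactly one, so valley $=$ peak $-$ length $+1$.) *)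

theory Defs
  imports Main
begin

text \<open>Words in the generators x_1..x_n of the nil-Temperley-Lieb algebra A_n of
the path graph P_n are represented by their index sequences (nat lists).\<close>

definition is_word :: "nat \<Rightarrow> nat list \<Rightarrow> bool" where
  "is_word n w \<longleftrightarrow> (\<forall>i\<in>set w. 1 \<le> i \<and> i \<le> n)"

definition comm_step :: "nat list \<Rightarrow> nat list \<Rightarrow> bool" where
  "comm_step u v \<longleftrightarrow> (\<exists>a b i j. u = a @ [i, j] @ b \<and> v = a @ [j, i] @ b
      \<and> (i + 1 < j \<or> j + 1 < i))"

definition word_equiv :: "nat list \<Rightarrow> nat list \<Rightarrow> bool" where
  "word_equiv u v \<longleftrightarrow> comm_step\<^sup>*\<^sup>* u v"

definition has_relator :: "nat list \<Rightarrow> bool" where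
  "has_relator u \<longleftrightarrow> (\<exists>a b i. u = a @ [i, i] @ b \<or> u = a @ [i, Suc i, i] @ b
      \<or> u = a @ [Suc i, i, Suc i] @ b)"

text \<open>Reducible: equal to 0 in A_n. Since all defining relations of A_n are
commutations or monomials set to zero, A_n is the contracted semigroup algebra of the
corresponding monoid with zero, and a word is 0 iff it is commutation-equivalent
to a word containing a relator.\<close>
definition reducible :: "nat list \<Rightarrow> bool" where
  "reducible w \<longleftrightarrow> (\<exists>u. word_equiv w u \<and> has_relator u)"

definition ntl_monomial :: "nat \<Rightarrow> nat list \<Rightarrow> bool" where
  "ntl_monomial n w \<longleftrightarrow> is_word n w \<and> \<not> reducible w
      \<and> (\<forall>u. word_equiv w u \<longrightarrow> lexordp_eq w u)"

definition run_decomp :: "nat list \<Rightarrow> nat list list \<Rightarrow> bool" where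
  "run_decomp w R \<longleftrightarrow> concat R = w \<and> (\<forall>r\<in>set R. r \<noteq> [] \<and> sorted_wrt (>) r)
      \<and> (\<forall>i. Suc i < length R \<longrightarrow> last (R ! i) \<le> hd (R ! Suc i))"

end

theory Submission
  imports Defs
begin

fun stepl :: "nat list \<Rightarrow> bool" where
  "stepl (x # y # r) = (x = Suc y \<and> stepl (y # r))"
| "stepl _ = True"

lemma lex_app_same: "lexordp_eq (a @ xs) (a @ (ys::nat list)) \<longleftrightarrow> lexordp_eq xs ys"
  by (induction a) simp_all

lemma no_gap:
  assumes "ntl_monomial n (a @ [x, y] @ b)" "y + 1 < x"
  shows False
proof -
  have "comm_step (a @ [x, y] @ b) (a @ [y, x] @ b)"
    unfolding comm_step_def using assms(2) by blast
  hence "word_equiv (a @ [x, y] @ b) (a @ [y, x] @ b)"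
    unfolding word_equiv_def by blast
  hence "lexordp_eq (a @ [x, y] @ b) (a @ [y, x] @ b)"
    using assms(1) unfolding ntl_monomial_def by blast
  hence "lexordp_eq ([x, y] @ b) ([y, x] @ b)" using lex_app_same by blast
  thus False using assms(2) by simp
qed

lemma run_step:
  assumes "ntl_monomial n (A @ r @ B)" "sorted_wrt (>) r"
  shows "stepl r"
  using assms
proof (induction r arbitrary: A rule: stepl.induct)
  case (1 x y r)
  have "x > y" using 1(3) by simp
  have "x = Suc y"
  proof (rule ccontr)
    assume "x \<noteq> Suc y"
    hence "y + 1 < x" using \<open>x > y\<close> by simp
    moreover have "ntl_monomial n (A @ [x, y] @ (r @ B))" using 1(2) by simp
    ultimately show False using no_gap by blast
  qed
  moreover have "stepl (y # r)"
    using 1(1)[of "A @ [x]"] 1(2,3) by simp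
  ultimately show ?case by simp
qed auto

lemma step_valley:
  "stepl r \<Longrightarrow> r \<noteq> [] \<Longrightarrow> int (hd r) - int (length r) + 1 = int (last r)"
  by (induction r rule: stepl.induct) auto

lemma equiv_reducible:
  "word_equiv u v \<Longrightarrow> reducible v \<Longrightarrow> reducible u"
  unfolding reducible_def word_equiv_def by (meson rtranclp_trans)

lemma move_red:
  assumes "stepl r" "r \<noteq> []" "v < hd r" "last r \<le> v"
  shows "reducible (A @ [v] @ r @ B)"
  using assms
proof (induction r arbitrary: A)
  case Nil
  then show ?case by simp
next
  case (Cons x r')
  have "r' \<noteq> []" using Cons by auto
  then obtain y r'' where r': "r' = y # r''" by (cases r') auto
  have xy: "x = Suc y" and st: "stepl r'" using Cons(2) r' by auto
  show ?case
  proof (cases "x = Suc v")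
    case True
    hence "y = v" using xy by simp
    have "A @ [v] @ (x # r') @ B = A @ [v, Suc v, v] @ (r'' @ B)"
      using True r' \<open>y = v\<close> by simp
    hence "has_relator (A @ [v] @ (x # r') @ B)"
      unfolding has_relator_def by blast
    thus ?thesis unfolding reducible_def word_equiv_def by blast
  next
    case False
    hence "v + 1 < x" using Cons(4) by simp
    hence "comm_step (A @ [v, x] @ (r' @ B)) (A @ [x, v] @ (r' @ B))"
      unfolding comm_step_def by blast
    hence eq: "word_equiv (A @ [v] @ (x # r') @ B) ((A @ [x]) @ [v] @ r' @ B)"
      unfolding word_equiv_def by simp
    have h1: "v < hd r'" using r' xy \<open>v + 1 < x\<close> by simp
    have h2: "last r' \<le> v" using Cons(5) \<open>r' \<noteq> []\<close> by simp
    have "reducible ((A @ [x]) @ [v] @ r' @ B)"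
      by (rule Cons.IH[OF st \<open>r' \<noteq> []\<close> h1 h2])
    thus ?thesis using eq equiv_reducible by blast
  qed
qed

theorem lemma4:
  fixes n :: nat and w :: "nat list" and R :: "nat list list"
  assumes "ntl_monomial n w"
    and "run_decomp w R"
  shows "sorted_wrt (<) (map (\<lambda>r. int (hd r) - int (length r) + 1) R)"
proof -
  have cw: "concat R = w" and runs: "\<forall>r\<in>set R. r \<noteq> [] \<and> sorted_wrt (>) r"
    and bd: "\<forall>i. Suc i < length R \<longrightarrow> last (R ! i) \<le> hd (R ! Suc i)"
    using assms(2) unfolding run_decomp_def by auto
  have stR: "stepl r" if rin: "r \<in> set R" for r
  proof -
    obtain xs ys where "R = xs @ r # ys" using split_list[OF rin] by blast
    hence "w = concat xs @ r @ concat ys" using cw by auto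
    hence "ntl_monomial n (concat xs @ r @ concat ys)" using assms(1) by simp
    moreover have "sorted_wrt (>) r" using runs rin by blast
    ultimately show ?thesis by (rule run_step)
  qed
  have mapeq: "map (\<lambda>r. int (hd r) - int (length r) + 1) R = map (\<lambda>r. int (last r)) R"
    using stR runs step_valley by (auto intro: map_cong)
  have cons: "int (last (R ! i)) < int (last (R ! Suc i))" if i: "Suc i < length R" for i
  proof (rule ccontr)
    assume "\<not> ?thesis"
    hence le: "last (R ! Suc i) \<le> last (R ! i)" by simp
    define r1 where "r1 = R ! i"
    define r2 where "r2 = R ! Suc i"
    define A where "A = concat (take i R)"
    define B where "B = concat (drop (Suc (Suc i)) R)"
    have R1: "R = take i R @ R ! i # drop (Suc i) R"
      using i by (simp add: id_take_nth_drop)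
    have R2: "drop (Suc i) R = R ! Suc i # drop (Suc (Suc i)) R"
      using i by (simp add: Cons_nth_drop_Suc)
    have "R = take i R @ r1 # r2 # drop (Suc (Suc i)) R"
      unfolding r1_def r2_def using R1 R2 by simp
    hence w: "w = A @ r1 @ r2 @ B" using cw unfolding A_def B_def
      by (metis append.assoc concat.simps(2) concat_append)
    have in1: "r1 \<in> set R" "r2 \<in> set R" unfolding r1_def r2_def using i by auto
    hence ne: "r1 \<noteq> []" "r2 \<noteq> []" using runs by auto
    have st2: "stepl r2" using stR in1 by auto
    define v where "v = last r1"
    have r1e: "r1 = butlast r1 @ [v]" using ne v_def by simp
    have vq: "v \<le> hd r2" using bd i unfolding v_def r1_def r2_def by auto
    have wv: "w = (A @ butlast r1) @ [v] @ r2 @ B" using w r1e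
      by (metis append.assoc)
    have "reducible w"
    proof (cases "v = hd r2")
      case True
      have "r2 = v # tl r2" using True ne by simp
      hence "w = (A @ butlast r1) @ [v, v] @ (tl r2 @ B)" using wv
        by (metis append.assoc append_Cons append_Nil)
      hence "has_relator w" unfolding has_relator_def by blast
      thus ?thesis unfolding reducible_def word_equiv_def by blast
    next
      case False
      hence "v < hd r2" using vq by simp
      moreover have "last r2 \<le> v" using le unfolding v_def r1_def r2_def .
      ultimately show ?thesis using move_red[OF st2 ne(2)] wv by metis
    qed
    thus False using assms(1) unfolding ntl_monomial_def by blast
  qed
  have "sorted_wrt (<) (map (\<lambda>r. int (last r)) R)"
    by (subst sorted_wrt_iff_nth_Suc_transp) (use cons in auto)
  thus ?thesis unfolding mapeq .
qed

end
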